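(* For $n\in\mathbb{N}$, \[ B_{2n+1}^{*}=\frac{(-1)^n}{4}+\frac12U_{2n}\!\left(\tfrac12\right)=\frac{(-1)^n}{4}+\frac{1}{\sqrt3}\sin\!\left(\frac{(2n+1)\pi}{3}\right). \]
   Context: $B_r$ denotes the Bernoulli numbers and $B_n^{*}:=\sum_{r=0}^{n}\binom{n+r}{2r}\frac{B_r}{n+r}$ for $n\ge1$ (Zagier's modified Bernoulli numbers). $U_k$ is the Chebyshev polynomial of the second kind, $U_k(\cos\theta)=\frac{\sin((k+1)\theta)}{\sin\theta}$. *)

theory Defs
  imports Complex_Main
begin

text \<open>Bernoulli numbers with the convention B_1 = -1/2, defined by the standard
recurrence  sum_{k=0}^{n} (n+1 choose k) B_k = 0  for n >= 1, B_0 = 1.\<close>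
fun bernoulli :: "nat \<Rightarrow> real" where
  "bernoulli n = (if n = 0 then 1 else
     - (\<Sum>k<n. real ((n + 1) choose k) * bernoulli k) / real (n + 1))"

declare bernoulli.simps [simp del]

definition bernoulli_star :: "nat \<Rightarrow> real" where
  "bernoulli_star n = (\<Sum>r=0..n. real ((n + r) choose (2 * r)) * bernoulli r / real (n + r))"

text \<open>Chebyshev polynomials of the second kind, U_0 = 1, U_1 = 2x,
U_{k+2} = 2x U_{k+1} - U_k; equivalently U_k(cos t) = sin((k+1)t)/sin t.\<close>
fun chebyshevU :: "nat \<Rightarrow> real \<Rightarrow> real" where
  "chebyshevU 0 x = 1"
| "chebyshevU (Suc 0) x = 2 * x"
| "chebyshevU (Suc (Suc k)) x = 2 * x * chebyshevU (Suc k) x - chebyshevU k x"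

end

theory Submission imports Defs "HOL-Computational_Algebra.Computational_Algebra" begin


lemma bern_rec:
  assumes "n \<ge> 1"
  shows "(\<Sum>k\<le>n. real (Suc n choose k) * bernoulli k) = 0"
proof -
  have b: "bernoulli n = - (\<Sum>k<n. real ((n + 1) choose k) * bernoulli k) / real (n + 1)"
    using assms by (subst bernoulli.simps) simp
  have "(\<Sum>k\<le>n. real (Suc n choose k) * bernoulli k)
      = (\<Sum>k<n. real (Suc n choose k) * bernoulli k) + real (Suc n) * bernoulli n"
    by (simp add: lessThan_Suc_atMost[symmetric])
  also have "\<dots> = 0" using b by (simp add: field_simps)
  finally show ?thesis .
qed

definition bfps :: "real fps" where "bfps = Abs_fps (\<lambda>n. bernoulli n / fact n)"

lemma bfps_eq: "bfps * (fps_exp 1 - 1) = fps_X"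
proof (rule fps_ext)
  fix n
  show "(bfps * (fps_exp 1 - 1)) $ n = fps_X $ n"
  proof (cases n)
    case 0 then show ?thesis by (simp add: fps_mult_nth)
  next
    case (Suc N)
    have "(bfps * (fps_exp 1 - 1)) $ n = (\<Sum>i=0..Suc N. bernoulli i / fact i * (if Suc N - i = 0 then 0 else 1 / fact (Suc N - i)))"
      using Suc by (simp add: fps_mult_nth bfps_def)
    also have "\<dots> = (\<Sum>i\<le>N. bernoulli i / fact i * (1 / fact (Suc N - i)))"
      by (simp add: atLeast0AtMost sum.atMost_Suc mult.commute)
    also have "\<dots> = (\<Sum>i\<le>N. real (Suc N choose i) * bernoulli i) / fact (Suc N)"
      unfolding sum_divide_distrib
    proof (rule sum.cong[OF refl])
      fix i assume "i \<in> {..N}"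
      then have "i \<le> Suc N" by simp
      then show "bernoulli i / fact i * (1 / fact (Suc N - i)) = real (Suc N choose i) * bernoulli i / fact (Suc N)"
      proof -
        have c: "real (Suc N choose i) = fact (Suc N) / (fact i * fact (Suc N - i))"
          using \<open>i \<le> Suc N\<close> by (rule binomial_fact)
        have "fact (Suc N) \<noteq> (0::real)" by simp
        then show ?thesis unfolding c by (simp add: field_simps del: fact_Suc)
      qed
    qed
    also have "\<dots> = fps_X $ n"
    proof (cases "N = 0")
      case True then show ?thesis using Suc by (simp add: bernoulli.simps)
    next
      case False then show ?thesis using Suc bern_rec[of N] by simp
    qed
    finally show ?thesis .
  qed
qed

lemma bern_sym: "(-1) ^ n * bernoulli n = bernoulli n + (if n = 1 then 1 else 0)"
proof -
  define E :: "real fps" where "E = fps_exp 1"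
  define g where "g = bfps oo (- fps_X)"
  have "(bfps * (E - 1)) oo (- fps_X) = g * (fps_exp (-1) - 1)"
    unfolding g_def E_def
    by (simp add: fps_compose_mult_distrib fps_compose_sub_distrib)
  then have g1: "g * (fps_exp (-1) - 1) = - fps_X"
    using bfps_eq unfolding E_def by simp
  have EE: "E * fps_exp (-1) = 1"
    unfolding E_def by (simp add: fps_exp_add_mult[symmetric])
  have "g * (E - 1) = fps_X * E"
  proof -
    have "g * (E - 1) = - (g * (fps_exp (-1) - 1)) * E"
      using EE by (simp add: algebra_simps)
    then show ?thesis using g1 by simp
  qed
  then have "(g - fps_X) * (E - 1) = bfps * (E - 1)"
    using bfps_eq unfolding E_def by (simp add: algebra_simps)
  moreover have "E - 1 \<noteq> 0"
  proof
    assume "E - 1 = 0"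
    then have "(E - 1) $ 1 = 0" by simp
    then show False unfolding E_def by simp
  qed
  ultimately have "g - fps_X = bfps" by simp
  then have "(g - fps_X) $ n = bfps $ n" by simp
  then have "(-1)^n * (bernoulli n / fact n) - (if n = 1 then 1 else 0) = bernoulli n / fact n"
    unfolding g_def by (simp add: fps_compose_uminus' bfps_def)
  then show ?thesis
    by (cases "n = 1") (auto simp: field_simps)
qed




definition Lb :: "real poly \<Rightarrow> real" where
  "Lb p = (\<Sum>i\<le>degree p. coeff p i * bernoulli i)"

lemma Lb_bound: "degree p \<le> N \<Longrightarrow> Lb p = (\<Sum>i\<le>N. coeff p i * bernoulli i)"
  unfolding Lb_def
  by (rule sum.mono_neutral_left) (auto simp: coeff_eq_0)

lemma Lb_add: "Lb (p + q) = Lb p + Lb q"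
proof -
  let ?N = "max (degree p) (degree q)"
  have "degree (p + q) \<le> ?N" by (rule degree_add_le) auto
  then show ?thesis
    using Lb_bound[of p ?N] Lb_bound[of q ?N] Lb_bound[of "p+q" ?N]
    by (simp add: sum.distrib algebra_simps)
qed

lemma Lb_smult: "Lb (smult c p) = c * Lb p"
  using Lb_bound[of "smult c p" "degree p"] Lb_bound[of p "degree p"]
  by (simp add: sum_distrib_left mult.assoc)

lemma Lb_minus: "Lb (- p) = - Lb p"
  using Lb_smult[of "-1" p] by simp

lemma Lb_diff: "Lb (p - q) = Lb p - Lb q"
  using Lb_add[of p "-q"] Lb_minus[of q] by simp

lemma Lb_sum: "finite A \<Longrightarrow> Lb (sum f A) = (\<Sum>i\<in>A. Lb (f i))"
proof (induct A rule: finite_induct)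
  case empty then show ?case by (simp add: Lb_def)
next
  case (insert x F) then show ?case by (simp add: Lb_add)
qed

lemma pcompose_X_power: "pcompose ([:0, 1:] ^ n) r = r ^ n"
proof (induct n)
  case 0 then show ?case by (simp add: pcompose_1)
next
  case (Suc n)
  have "pcompose ([:0, 1:] ^ Suc n) r = pcompose [:0, 1:] r * pcompose ([:0, 1:] ^ n) r"
    by (simp only: power_Suc pcompose_mult)
  also have "pcompose [:0, 1:] r = r" by (simp add: pcompose_pCons)
  finally show ?case using Suc by simp
qed

lemma Lb_compose: "Lb (pcompose p r) = (\<Sum>i\<le>degree p. coeff p i * Lb (r ^ i))"
proof -
  have "pcompose p r = pcompose (\<Sum>i\<le>degree p. monom (coeff p i) i) r"
    by (simp add: poly_as_sum_of_monoms)
  also have "\<dots> = (\<Sum>i\<le>degree p. smult (coeff p i) (r ^ i))"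
    by (simp add: pcompose_sum monom_altdef pcompose_smult pcompose_X_power)
  finally show ?thesis by (simp add: Lb_sum Lb_smult)
qed

lemma coeff_lin_pow: "coeff ([:1, 1:] ^ n) k = real (n choose k)"
proof -
  have "[:1, 1:] = [:0, 1:] + (1 :: real poly)" by (simp add: one_pCons)
  then have "[:1, 1:] ^ n = (\<Sum>k\<le>n. of_nat (n choose k) * [:0, 1:] ^ k * 1 ^ (n - k) :: real poly)"
    by (simp add: binomial_ring)
  also have "\<dots> = (\<Sum>j\<le>n. monom (real (n choose j)) j)"
    by (simp add: monom_altdef of_nat_poly)
  finally show ?thesis by (simp add: coeff_sum)
qed

lemma bern1: "bernoulli 1 = -1/2"
  by (simp add: bernoulli.simps)

lemma Lb_lin_pow: "Lb ([:1, 1:] ^ n) = bernoulli n + (if n = 1 then 1 else 0)"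
proof -
  have "Lb ([:1, 1:] ^ n) = (\<Sum>k\<le>n. real (n choose k) * bernoulli k)"
    by (simp add: Lb_def degree_linear_power coeff_lin_pow)
  also have "\<dots> = bernoulli n + (if n = 1 then 1 else 0)"
  proof (cases "n \<ge> 2")
    case True
    then obtain j where j: "n = Suc j" "j \<ge> 1" by (cases n) auto
    then show ?thesis using bern_rec[of j] by (simp add: sum.atMost_Suc)
  next
    case False
    then have "n = 0 \<or> n = 1" by auto
    then show ?thesis by (auto simp: bern1 bernoulli.simps)
  qed
  finally show ?thesis .
qed

lemma Lb_shift: "Lb (pcompose p [:1, 1:]) = Lb p + coeff p 1"
proof -
  have "Lb (pcompose p [:1, 1:]) = (\<Sum>i\<le>degree p. coeff p i * bernoulli i) + (\<Sum>i\<le>degree p. coeff p i * (if i = 1 then 1 else 0))"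
    by (simp add: Lb_compose Lb_lin_pow sum.distrib algebra_simps)
  also have "(\<Sum>i\<le>degree p. coeff p i * (if i = 1 then 1 else 0)) = coeff p 1"
    by (cases "degree p \<ge> 1") (auto simp: sum.delta coeff_eq_0 if_distrib cong: if_cong)
  finally show ?thesis by (simp add: Lb_def)
qed

lemma Lb_refl: "Lb (pcompose p [:-1, -1:]) = Lb p"
proof -
  have e: "[:-1, -1:] = smult (-1) [:1, 1::real:]" by simp
  have "Lb ([:-1, -1:] ^ i) = bernoulli i" for i
    unfolding e smult_power Lb_smult Lb_lin_pow
    using bern_sym[of i] by (auto simp: algebra_simps)
  then show ?thesis unfolding Lb_compose by (simp add: Lb_def)
qed




fun Tp :: "nat \<Rightarrow> real poly" where
  "Tp 0 = 1"
| "Tp (Suc 0) = [:0, 1:]"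
| "Tp (Suc (Suc k)) = [:0, 2:] * Tp (Suc k) - Tp k"

lemma T_odd: "poly (Tp k) (-x) = (-1) ^ k * poly (Tp k) x"
  by (induct k rule: Tp.induct) (simp_all add: algebra_simps)

lemma U_even: "chebyshevU k (-x) = (-1) ^ k * chebyshevU k x"
  by (induct k x rule: chebyshevU.induct) (simp_all add: algebra_simps)

lemma U_zero: "chebyshevU (2 * n) 0 = (-1) ^ n"
proof (induct n)
  case 0 then show ?case by simp
next
  case (Suc n)
  have "chebyshevU (2 * Suc n) 0 = - chebyshevU (2 * n) 0"
    by (simp add: numeral_2_eq_2)
  then show ?case using Suc by simp
qed

lemma T_U: "poly (Tp (Suc k)) x = x * chebyshevU k x - (if k = 0 then 0 else chebyshevU (k - 1) x)"
proof (induct k x rule: chebyshevU.induct)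
  case (1 x) then show ?case by simp
next
  case (2 x) then show ?case by (simp add: algebra_simps)
next
  case (3 k x)
  have r: "chebyshevU (Suc k) x = 2 * x * chebyshevU k x - (if k = 0 then 0 else chebyshevU (k - 1) x)"
    by (cases k) simp_all
  have t: "poly (Tp (Suc (Suc (Suc k)))) x = 2 * x * poly (Tp (Suc (Suc k))) x - poly (Tp (Suc k)) x"
    by simp
  have u: "chebyshevU (Suc (Suc k)) x = 2 * x * chebyshevU (Suc k) x - chebyshevU k x" by simp
  have h1: "poly (Tp (Suc (Suc k))) x = x * chebyshevU (Suc k) x - chebyshevU k x"
    using "3.hyps"(1) by (simp del: chebyshevU.simps Tp.simps)
  have h2: "poly (Tp (Suc k)) x = x * chebyshevU k x - (if k = 0 then 0 else chebyshevU (k - 1) x)"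
    using "3.hyps"(2) by (simp del: chebyshevU.simps Tp.simps)
  show ?case unfolding t u h1 h2 using r by (simp del: chebyshevU.simps Tp.simps add: algebra_simps)
qed

lemma T_deriv: "poly (pderiv (Tp (Suc k))) x = real (Suc k) * chebyshevU k x"
proof (induct k x rule: chebyshevU.induct)
  case (1 x) then show ?case by (simp add: pderiv_pCons)
next
  case (2 x) then show ?case by (simp add: pderiv_pCons pderiv_mult pderiv_diff algebra_simps)
next
  case (3 k x)
  have "poly (pderiv (Tp (Suc (Suc (Suc k))))) x
     = 2 * poly (Tp (Suc (Suc k))) x + 2 * x * poly (pderiv (Tp (Suc (Suc k)))) x - poly (pderiv (Tp (Suc k))) x"
  proof -
    have e: "Tp (Suc (Suc (Suc k))) = [:0, 2:] * Tp (Suc (Suc k)) - Tp (Suc k)" by (rule Tp.simps(3))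
    show ?thesis unfolding e pderiv_diff pderiv_mult
      by (simp del: Tp.simps add: pderiv_pCons algebra_simps)
  qed
  also have "poly (Tp (Suc (Suc k))) x = x * chebyshevU (Suc k) x - chebyshevU k x"
    using T_U[of "Suc k" x] by simp
  finally show ?case using 3 by (simp add: algebra_simps)
qed

lemma U_half: "chebyshevU k (1/2) = 2 * sin (real (Suc k) * pi / 3) / sqrt 3"
proof (induct k rule: nat_less_induct)
  case (1 k)
  show ?case
  proof (cases k)
    case 0 then show ?thesis by (simp add: sin_60)
  next
    case (Suc j)
    show ?thesis
    proof (cases j)
      case 0 then show ?thesis using Suc
        by (simp add: sin_60 sin_120 sin_double)
    next
      case (Suc i)
      have h: "sin (t + 2 * pi / 3) = sin (t + pi / 3) - sin t" for t
      proof -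
        have a: "t + 2 * pi / 3 = (t + pi / 3) + pi / 3" by simp
        show ?thesis unfolding a sin_add cos_add sin_60 cos_60
          by (simp add: algebra_simps)
      qed
      have "chebyshevU k (1/2) = chebyshevU (Suc i) (1/2) - chebyshevU i (1/2)"
        using Suc \<open>k = Suc j\<close> by simp
      also have "\<dots> = 2 * (sin (real (Suc (Suc i)) * pi / 3) - sin (real (Suc i) * pi / 3)) / sqrt 3"
        using 1 Suc \<open>k = Suc j\<close> by (simp add: diff_divide_distrib)
      also have "sin (real (Suc (Suc i)) * pi / 3) - sin (real (Suc i) * pi / 3) = sin (real (Suc k) * pi / 3)"
        using h[of "real (Suc i) * pi / 3"] Suc \<open>k = Suc j\<close> by (simp add: algebra_simps add_divide_distrib)
      finally show ?thesis .
    qed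
  qed
qed




definition Qp :: "nat \<Rightarrow> real poly" where
  "Qp m = (\<Sum>r\<le>m. monom (real ((m + r) choose (2 * r))) r)"

lemma coeff_Qp: "coeff (Qp m) k = real ((m + k) choose (2 * k))"
proof (cases "k \<le> m")
  case True then show ?thesis by (simp add: Qp_def coeff_sum)
next
  case False
  then have "(m + k) choose (2 * k) = 0" by (simp add: binomial_eq_0)
  then show ?thesis using False by (simp add: Qp_def coeff_sum)
qed

lemma degree_Qp: "degree (Qp m) \<le> m"
  unfolding Qp_def by (rule degree_sum_le) (auto intro: order.trans[OF degree_monom_le])

lemma binom_aux: "((a + 2) choose (b + 2)) + (a choose (b + 2)) = 2 * ((a + 1) choose (b + 2)) + (a choose b)"
  by (simp add: numeral_2_eq_2)

lemma Qp_rec: "Qp (Suc (Suc m)) = [:2, 1:] * Qp (Suc m) - Qp m"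
proof (rule poly_eqI)
  fix k
  show "coeff (Qp (Suc (Suc m))) k = coeff ([:2, 1:] * Qp (Suc m) - Qp m) k"
  proof (cases k)
    case 0 then show ?thesis by (simp add: coeff_Qp)
  next
    case (Suc j)
    have "((m + j + 1 + 2) choose (2 * j + 2)) + ((m + j + 1) choose (2 * j + 2))
       = 2 * ((m + j + 1 + 1) choose (2 * j + 2)) + ((m + j + 1) choose (2 * j))"
      by (rule binom_aux)
    then have "real ((m + j + 1 + 2) choose (2 * j + 2)) + real ((m + j + 1) choose (2 * j + 2))
       = 2 * real ((m + j + 1 + 1) choose (2 * j + 2)) + real ((m + j + 1) choose (2 * j))"
      by (metis (mono_tags, lifting) of_nat_add of_nat_mult of_nat_numeral)
    then show ?thesis using Suc
      by (simp add: coeff_Qp algebra_simps)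
  qed
qed

lemma ring_aux: "(c::'a::comm_ring_1) * ((c * q1 - q0) + q1) - (q1 + q0) = (c * (c * q1 - q0) - q1) + (c * q1 - q0)"
  by (simp add: algebra_simps)

lemma T_Q: "smult 2 (pcompose (Tp (Suc m)) [:1, 1/2:]) = Qp (Suc m) + Qp m
          \<and> smult 2 (pcompose (Tp (Suc (Suc m))) [:1, 1/2:]) = Qp (Suc (Suc m)) + Qp (Suc m)"
proof (induct m)
  case 0
  have a: "smult 2 (pcompose (Tp (Suc 0)) [:1, 1/2:]) = Qp (Suc 0) + Qp 0"
    by (rule poly_ext) (simp add: Qp_def poly_sum pcompose_pCons numeral_2_eq_2 poly_monom)
  have b: "smult 2 (pcompose (Tp (Suc (Suc 0))) [:1, 1/2:]) = Qp (Suc (Suc 0)) + Qp (Suc 0)"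
    by (rule poly_ext) (simp add: Qp_def poly_sum poly_pcompose numeral_2_eq_2 poly_monom algebra_simps power2_eq_square)
  show ?case using a b by simp
next
  case (Suc m)
  have "smult 2 (pcompose (Tp (Suc (Suc (Suc m)))) [:1, 1/2:])
      = [:2, 1:] * smult 2 (pcompose (Tp (Suc (Suc m))) [:1, 1/2:]) - smult 2 (pcompose (Tp (Suc m)) [:1, 1/2:])"
  proof -
    have e: "Tp (Suc (Suc (Suc m))) = [:0, 2:] * Tp (Suc (Suc m)) - Tp (Suc m)" by (rule Tp.simps(3))
    have f: "pcompose [:0, 2:] [:1, 1/2:] = ([:2, 1:] :: real poly)" by (simp add: pcompose_pCons)
    show ?thesis unfolding e pcompose_diff pcompose_mult f
      by (simp only: smult_diff_right mult_smult_right)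
  qed
  also have "\<dots> = [:2, 1:] * (Qp (Suc (Suc m)) + Qp (Suc m)) - (Qp (Suc m) + Qp m)"
    by (simp only: conjunct1[OF Suc.hyps] conjunct2[OF Suc.hyps])
  also have "\<dots> = Qp (Suc (Suc (Suc m))) + Qp (Suc (Suc m))"
    unfolding Qp_rec[of "Suc m"] Qp_rec[of m] by (rule ring_aux)
  finally show ?case using conjunct2[OF Suc.hyps] by simp
qed

lemma real_aux:
  fixes m r A C B :: real
  assumes "(m - r) * A = (m + r) * C" "m + r > 0"
  shows "(A + C) * B = 2 * m * (A * B / (m + r))"
proof -
  have c: "C * (m + r) = (m - r) * A" using assms(1) by (simp add: mult.commute)
  have "(A + C) * (m + r) = A * (m + r) + C * (m + r)" by (simp add: distrib_right)
  also have "\<dots> = 2 * m * A" unfolding c by (simp add: algebra_simps)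
  finally have "A + C = 2 * m * A / (m + r)" using assms(2) by (simp add: eq_divide_eq)
  then show ?thesis by simp
qed

lemma bstar_Lb:
  assumes "m \<ge> 1"
  shows "bernoulli_star m = Lb (Qp m + Qp (m - 1)) / (2 * real m)"
proof -
  have d: "degree (Qp m + Qp (m - 1)) \<le> m"
    using degree_Qp[of m] degree_Qp[of "m - 1"] by (intro degree_add_le) auto
  have "Lb (Qp m + Qp (m - 1)) = (\<Sum>r\<le>m. (real ((m + r) choose (2 * r)) + real ((m - 1 + r) choose (2 * r))) * bernoulli r)"
    using Lb_bound[OF d] by (simp add: coeff_Qp)
  also have "\<dots> = (\<Sum>r\<le>m. 2 * real m * (real ((m + r) choose (2 * r)) * bernoulli r / real (m + r)))"
  proof (rule sum.cong[OF refl])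
    fix r assume "r \<in> {..m}"
    then have r: "r \<le> m" by simp
    have "(m + r - 2 * r) * ((m + r) choose (2 * r)) = (m + r) * ((m + r - 1) choose (2 * r))"
      by (rule binomial_absorb_comp)
    moreover have "m + r - 2 * r = m - r" "m + r - 1 = m - 1 + r" using r assms by auto
    ultimately have "(m - r) * ((m + r) choose (2 * r)) = (m + r) * ((m - 1 + r) choose (2 * r))" by simp
    then have "real (m - r) * real ((m + r) choose (2 * r)) = real (m + r) * real ((m - 1 + r) choose (2 * r))"
      by (metis of_nat_mult)
    then have c: "(real m - real r) * real ((m + r) choose (2 * r)) = (real m + real r) * real ((m - 1 + r) choose (2 * r))"
      using r by (simp add: of_nat_diff)
    have pos: "real m + real r > 0" using assms by simp
    show "(real ((m + r) choose (2 * r)) + real ((m - 1 + r) choose (2 * r))) * bernoulli r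
        = 2 * real m * (real ((m + r) choose (2 * r)) * bernoulli r / real (m + r))"
      using real_aux[OF c pos] by simp
  qed
  also have "\<dots> = 2 * real m * bernoulli_star m"
    by (simp add: bernoulli_star_def sum_distrib_left atLeast0AtMost)
  finally show ?thesis using assms by simp
qed




lemma coeff1_deriv: "coeff p 1 = poly (pderiv p) 0"
  by (simp add: poly_0_coeff_0 coeff_pderiv)

lemma deriv_lin: "poly (pderiv (pcompose (p :: real poly) [:a, 1/2:])) 0 = poly (pderiv p) a / 2"
  by (simp add: pderiv_pcompose poly_pcompose pderiv_pCons)


lemma pc: "poly (pcompose p [:a, b:]) z = poly p (a + z * b)"
  by (simp add: poly_pcompose)

theorem main:
  fixes n :: nat
  shows "bernoulli_star (2 * n + 1) = (-1) ^ n / 4 + chebyshevU (2 * n) (1 / 2) / 2"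
proof -
  define m where "m = Suc (2 * n)"
  define T where "T = Tp m"
  define t where "t = poly T"
  define P where "P = smult 2 (pcompose T [:1, 1/2:])"
  define F where "F = pcompose T [:1/2, 1/2:] + pcompose T [:0, 1/2:] + pcompose T [:-1/2, 1/2:]"
  have PQ: "P = Qp m + Qp (m - 1)"
    using conjunct1[OF T_Q[of "2 * n"]] unfolding P_def T_def m_def by simp
  have todd: "t (- x) = - t x" for x
    unfolding t_def T_def m_def using T_odd[of "Suc (2 * n)" x] by simp
  have E1: "P + pcompose P [:-1, -1:] = smult 2 (pcompose F [:1, 1:] - F)"
  proof (rule poly_ext)
    fix y :: real
    have a1: "poly P y = 2 * t (1 + y / 2)"
      unfolding P_def t_def by (simp add: poly_pcompose algebra_simps)
    have "poly (pcompose P [:-1, -1:]) y = 2 * t (1 + (- 1 - y) / 2)"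
      unfolding P_def t_def by (simp add: poly_pcompose algebra_simps)
    also have "1 + (- 1 - y) / 2 = - (y / 2 - 1 / 2)" by (simp add: field_simps)
    finally have "poly (pcompose P [:-1, -1:]) y = 2 * t (- (y / 2 - 1 / 2))" .
    then have a2: "poly (pcompose P [:-1, -1:]) y = - 2 * t (y / 2 - 1 / 2)"
      by (simp only: todd)
    have e1: "(1 + y) / 2 = 1 / 2 + y / 2" "(1 + y) / 2 - 1 / 2 = y / 2" "1 / 2 + (1 + y) / 2 = 1 + y / 2"
      by (simp_all add: field_simps)
    have f: "1/2 + (1 + y * 1) * (1/2) = 1 + y / 2" "0 + (1 + y * 1) * (1/2) = y / 2 + 1 / 2"
      "-1/2 + (1 + y * 1) * (1/2) = y / 2" "1/2 + y * (1/2) = y / 2 + 1 / 2" "0 + y * (1/2) = y / 2"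
      "-1/2 + y * (1/2) = y / 2 - 1 / 2"
      by (simp_all add: field_simps)
    have a3: "poly (pcompose F [:1, 1:]) y = t (1 + y / 2) + t (y / 2 + 1 / 2) + t (y / 2)"
      unfolding F_def t_def by (simp only: pcompose_add poly_add pc f)
    have a4: "poly F y = t (y / 2 + 1 / 2) + t (y / 2) + t (y / 2 - 1 / 2)"
      unfolding F_def t_def by (simp only: pcompose_add poly_add pc f)
    show "poly (P + pcompose P [:-1, -1:]) y = poly (smult 2 (pcompose F [:1, 1:] - F)) y"
      using a1 a2 a3 a4 by simp
  qed
  have "2 * Lb P = Lb (P + pcompose P [:-1, -1:])"
    by (simp add: Lb_add Lb_refl)
  also have "\<dots> = 2 * coeff F 1"
    unfolding E1 Lb_smult Lb_diff Lb_shift by simp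
  finally have LP: "Lb P = coeff F 1" by simp
  have dT: "poly (pderiv T) x = real m * chebyshevU (2 * n) x" for x
    unfolding T_def m_def using T_deriv[of "2 * n" x] by simp
  have "coeff F 1 = (poly (pderiv T) (1/2) + poly (pderiv T) 0 + poly (pderiv T) (-1/2)) / 2"
    unfolding coeff1_deriv F_def pderiv_add poly_add
    using deriv_lin[of T "1/2"] deriv_lin[of T 0] deriv_lin[of T "-1/2"] by simp
  also have "\<dots> = real m * (2 * chebyshevU (2 * n) (1/2) + (-1) ^ n) / 2"
    unfolding dT using U_even[of "2 * n" "1/2"] U_zero[of n] by (simp add: algebra_simps)
  finally have cF: "coeff F 1 = real m * (2 * chebyshevU (2 * n) (1/2) + (-1) ^ n) / 2" .
  have "bernoulli_star m = Lb (Qp m + Qp (m - 1)) / (2 * real m)"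
    by (rule bstar_Lb) (simp add: m_def)
  also have "\<dots> = (2 * chebyshevU (2 * n) (1/2) + (-1) ^ n) / 4"
    unfolding PQ[symmetric] LP cF by (simp add: m_def field_simps)
  finally show ?thesis unfolding m_def by simp
qed

theorem corollary5p1:
  fixes n :: nat
  shows "bernoulli_star (2 * n + 1) = (-1) ^ n / 4 + chebyshevU (2 * n) (1 / 2) / 2
       \<and> bernoulli_star (2 * n + 1) = (-1) ^ n / 4 + sin (real (2 * n + 1) * pi / 3) / sqrt 3"
  using main[of n] U_half[of "2 * n"] by simp


end
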